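(* Consider the following algorithm producing an $n\times n$ $(0,1)$-matrix $P=[p_{ij}]$: start with $P=O$; choose some $i\in\{1,\ldots,n\}$ and set $p_{i1}=1$; then for $k=1,2,\ldots,n-1$: if $I^*_k(P)=\emptyset$, stop; otherwise choose some $i\in I^*_k(P)$ and set $p_{i,k+1}=1$. If the algorithm never stops early (i.e. $I^*_k(P)\ne\emptyset$ at every step), then the resulting matrix is a convex permutation matrix. Conversely, every convex $n\times n$ permutation matrix can be obtained as the output of this algorithm for a suitable sequence of choices.
   Context: A subpermutation matrix is a $(0,1)$-matrix with at most one $1$ in each row and column. A permutation matrix $P$ of the permutation $\pi$ of $\{1,\ldots,n\}$ (with $1$'s in positions $(i,\pi_i)$) is convex if $\pi_2-\pi_1\le\pi_3-\pi_2\le\cdots\le\pi_n-\pi_{n-1}$. For a subpermutation matrix $P$, $I_k(P)$ is the set of rows containing a $1$ in one of the first $k$ columns. For $k\le n$, an $n\times n$ subpermutation matrix $P$ is $k$-convex if (i) each of its first $k$ columns contains exactly one $1$, (ii) $I_k(P)$ is an interval $\{r,r+1,\ldots,s\}$ of consecutive integers, and (iii) $\pi_{i+1}-\pi_i\le\pi_{i+2}-\pi_{i+1}$ for $i=r,\ldots,s-2$, where $\pi_i$ denotes the column of the unique $1$ in row $i$. For a $k$-convex subpermutation matrix $P$ whose columns $k+1,\ldots,n$ are zero, with $I_k(P)=\{r,\ldots,s\}$, the set $I^*_k(P)\subseteq\{r-1,s+1\}$ is defined by: $r-1\in I^*_k(P)$ iff $r>1$ and the matrix obtained from $P$ by putting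 a $1$ in position $(r-1,k+1)$ is $(k+1)$-convex; $s+1\in I^*_k(P)$ iff $s<n$ and the matrix obtained from $P$ by putting a $1$ in position $(s+1,k+1)$ is $(k+1)$-convex. *)

theory Defs
  imports Main
begin

text \<open>An n x n (0,1)-matrix is represented by the set of positions (i,j) (1-based,
  1 <= i,j <= n) carrying a 1.\<close>

definition subperm :: "nat \<Rightarrow> (nat \<times> nat) set \<Rightarrow> bool" where
  "subperm n P \<longleftrightarrow> P \<subseteq> {1..n} \<times> {1..n}
     \<and> (\<forall>i j j'. (i,j) \<in> P \<and> (i,j') \<in> P \<longrightarrow> j = j')
     \<and> (\<forall>i i' j. (i,j) \<in> P \<and> (i',j) \<in> P \<longrightarrow> i = i')"

definition pcol :: "(nat \<times> nat) set \<Rightarrow> nat \<Rightarrow> nat" where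
  "pcol P i = (THE j. (i,j) \<in> P)"

definition Ik :: "nat \<Rightarrow> (nat \<times> nat) set \<Rightarrow> nat set" where
  "Ik k P = {i. \<exists>j\<in>{1..k}. (i,j) \<in> P}"

definition kconvex :: "nat \<Rightarrow> nat \<Rightarrow> (nat \<times> nat) set \<Rightarrow> bool" where
  "kconvex n k P \<longleftrightarrow> k \<le> n \<and> subperm n P
     \<and> (\<forall>j\<in>{1..k}. \<exists>!i. (i,j) \<in> P)
     \<and> (\<exists>r s. Ik k P = {r..s}
          \<and> (\<forall>i. r \<le> i \<and> i + 2 \<le> s \<longrightarrow>
               int (pcol P (i+1)) - int (pcol P i) \<le> int (pcol P (i+2)) - int (pcol P (i+1))))"

definition Istar :: "nat \<Rightarrow> nat \<Rightarrow> (nat \<times> nat) set \<Rightarrow> nat set" where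
  "Istar n k P =
     {i. (1 < Min (Ik k P) \<and> i = Min (Ik k P) - 1 \<and> kconvex n (k+1) (insert (i, k+1) P))
       \<or> (Max (Ik k P) < n \<and> i = Max (Ik k P) + 1 \<and> kconvex n (k+1) (insert (i, k+1) P))}"

text \<open>Runs of the algorithm: alg_reach n k P means that after having filled the first k
  columns (without stopping) the algorithm can be in state P.\<close>
inductive alg_reach :: "nat \<Rightarrow> nat \<Rightarrow> (nat \<times> nat) set \<Rightarrow> bool" for n where
  start: "i \<in> {1..n} \<Longrightarrow> alg_reach n 1 {(i,1)}"
| step: "alg_reach n k P \<Longrightarrow> 1 \<le> k \<Longrightarrow> k \<le> n - 1 \<Longrightarrow> i \<in> Istar n k P
           \<Longrightarrow> alg_reach n (k+1) (insert (i, k+1) P)"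

definition perm_matrix :: "nat \<Rightarrow> (nat \<Rightarrow> nat) \<Rightarrow> (nat \<times> nat) set" where
  "perm_matrix n \<pi> = {(i, \<pi> i) | i. i \<in> {1..n}}"

definition convex_perm_matrix :: "nat \<Rightarrow> (nat \<times> nat) set \<Rightarrow> bool" where
  "convex_perm_matrix n P \<longleftrightarrow> (\<exists>\<pi>. bij_betw \<pi> {1..n} {1..n} \<and> P = perm_matrix n \<pi>
     \<and> (\<forall>i. 1 \<le> i \<and> i + 2 \<le> n \<longrightarrow>
          int (\<pi> (i+1)) - int (\<pi> i) \<le> int (\<pi> (i+2)) - int (\<pi> (i+1))))"

end

theory Submission
  imports Defs
begin

lemma pcol_eq: "subperm n P \<Longrightarrow> (i,j) \<in> P \<Longrightarrow> pcol P i = j"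
  unfolding pcol_def subperm_def by (rule the_equality) blast+

lemma reach_inv:
  "alg_reach n k P \<Longrightarrow> kconvex n k P \<and> P \<subseteq> {1..n} \<times> {1..k} \<and> 1 \<le> k"
proof (induction rule: alg_reach.induct)
  case (start i)
  have sp: "subperm n {(i,1)}" using start by (auto simp: subperm_def)
  have ik: "Ik 1 {(i,1)} = {i..i}" by (auto simp: Ik_def)
  have "kconvex n 1 {(i,1)}" unfolding kconvex_def
  proof (intro conjI)
    show "\<exists>r s. Ik 1 {(i,1)} = {r..s} \<and> (\<forall>ia. r \<le> ia \<and> ia + 2 \<le> s \<longrightarrow>
           int (pcol {(i,1)} (ia+1)) - int (pcol {(i,1)} ia) \<le> int (pcol {(i,1)} (ia+2)) - int (pcol {(i,1)} (ia+1)))"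
      by (rule exI[of _ i], rule exI[of _ i]) (auto simp: Ik_def)
  qed (use start sp in auto)
  then show ?case using start by auto
next
  case (step k P i)
  from step(4) have kc: "kconvex n (k+1) (insert (i, k+1) P)"
    unfolding Istar_def by blast
  then have "subperm n (insert (i, k+1) P)" unfolding kconvex_def by blast
  then have "i \<in> {1..n}" unfolding subperm_def by blast
  then show ?case using kc step by auto
qed

lemma final_conv:
  assumes kc: "kconvex n n P" and sub: "P \<subseteq> {1..n} \<times> {1..n}" and n1: "1 \<le> n"
  shows "convex_perm_matrix n P"
proof -
  have sp: "subperm n P" and col: "\<forall>j\<in>{1..n}. \<exists>!i. (i,j) \<in> P"
    and ex: "\<exists>r s. Ik n P = {r..s} \<and> (\<forall>i. r \<le> i \<and> i + 2 \<le> s \<longrightarrow>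
               int (pcol P (i+1)) - int (pcol P i) \<le> int (pcol P (i+2)) - int (pcol P (i+1)))"
    using kc unfolding kconvex_def by blast+
  define g where "g j = (THE i. (i,j) \<in> P)" for j
  have g: "(g j, j) \<in> P" if "j \<in> {1..n}" for j
    using col that unfolding g_def by (metis theI')
  have ginj: "inj_on g {1..n}"
  proof (rule inj_onI)
    fix a b assume "a \<in> {1..n}" "b \<in> {1..n}" "g a = g b"
    then show "a = b" using g[of a] g[of b] sp unfolding subperm_def by metis
  qed
  have gsub: "g ` {1..n} \<subseteq> {1..n}" using g sub by blast
  have gim: "g ` {1..n} = {1..n}" using endo_inj_surj[OF _ gsub ginj] by simp
  have row: "(i, pcol P i) \<in> P" if "i \<in> {1..n}" for i
  proof -
    from that gim obtain j where "j \<in> {1..n}" "i = g j" by blast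
    then show ?thesis using g pcol_eq[OF sp] by metis
  qed
  define \<pi> where "\<pi> = pcol P"
  have PP: "P = perm_matrix n \<pi>"
  proof
    show "P \<subseteq> perm_matrix n \<pi>"
    proof
      fix x assume "x \<in> P"
      moreover obtain i j where "x = (i,j)" by force
      ultimately show "x \<in> perm_matrix n \<pi>" using sub pcol_eq[OF sp] unfolding perm_matrix_def \<pi>_def
        by blast
    qed
    show "perm_matrix n \<pi> \<subseteq> P" using row unfolding perm_matrix_def \<pi>_def by blast
  qed
  have bij: "bij_betw \<pi> {1..n} {1..n}"
    unfolding bij_betw_def
  proof
    show "inj_on \<pi> {1..n}"
    proof (rule inj_onI)
      fix a b assume "a \<in> {1..n}" "b \<in> {1..n}" "\<pi> a = \<pi> b"
      then show "a = b" using row[of a] row[of b] sp unfolding subperm_def \<pi>_def by metis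
    qed
    show "\<pi> ` {1..n} = {1..n}"
    proof
      show "\<pi> ` {1..n} \<subseteq> {1..n}" using row sub unfolding \<pi>_def by blast
      show "{1..n} \<subseteq> \<pi> ` {1..n}"
      proof
        fix j assume "j \<in> {1..n}"
        then have "(g j, j) \<in> P" by (rule g)
        then have "g j \<in> {1..n}" "\<pi> (g j) = j" using sub pcol_eq[OF sp] unfolding \<pi>_def by blast+
        then show "j \<in> \<pi> ` {1..n}" by force
      qed
    qed
  qed
  have IkP: "Ik n P = {1..n}"
    using sub row unfolding Ik_def by fastforce
  from ex obtain r s where rs: "Ik n P = {r..s}" and cv: "\<forall>i. r \<le> i \<and> i + 2 \<le> s \<longrightarrow>
               int (pcol P (i+1)) - int (pcol P i) \<le> int (pcol P (i+2)) - int (pcol P (i+1))"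
    by blast
  have r1: "r = 1" and sn: "s = n" using rs IkP n1 by (simp_all add: Icc_eq_Icc)
  have cv': "\<forall>i. 1 \<le> i \<and> i + 2 \<le> n \<longrightarrow>
          int (\<pi> (i+1)) - int (\<pi> i) \<le> int (\<pi> (i+2)) - int (\<pi> (i+1))"
    using cv unfolding r1 sn \<pi>_def .
  show ?thesis unfolding convex_perm_matrix_def
    by (rule exI[of _ \<pi>]) (intro conjI bij PP cv')
qed

lemma dmono:
  fixes f :: "nat \<Rightarrow> int"
  assumes H: "\<forall>i. 1 \<le> i \<and> i + 2 \<le> n \<longrightarrow> f (i+1) - f i \<le> f (i+2) - f (i+1)"
    and "1 \<le> i" "i \<le> j" "j + 1 \<le> n"
  shows "f (i+1) - f i \<le> f (j+1) - f j"
  using assms(3,4)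
proof (induction j rule: dec_induct)
  case base then show ?case by simp
next
  case (step m)
  have "f (m+1) - f m \<le> f (m+2) - f (m+1)" using H assms(2) step by auto
  then show ?case using step by (simp add: add.commute)
qed

lemma up:
  fixes f :: "nat \<Rightarrow> int"
  assumes H: "\<forall>i. 1 \<le> i \<and> i + 2 \<le> n \<longrightarrow> f (i+1) - f i \<le> f (i+2) - f (i+1)"
    and "1 \<le> b" "b \<le> c" "c \<le> n" "b < n" "f b \<le> f (b+1)"
  shows "f b \<le> f c"
  using assms(3,4)
proof (induction c rule: dec_induct)
  case base then show ?case by simp
next
  case (step m)
  have "f (b+1) - f b \<le> f (m+1) - f m" using dmono[OF H assms(2), of m] step by simp
  then show ?case using step assms(6) by simp
qed

lemma down:
  fixes f :: "nat \<Rightarrow> int"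
  assumes H: "\<forall>i. 1 \<le> i \<and> i + 2 \<le> n \<longrightarrow> f (i+1) - f i \<le> f (i+2) - f (i+1)"
    and "1 \<le> a" "a \<le> b" "b + 1 \<le> n" "f (b+1) < f b"
  shows "f b \<le> f a"
proof -
  have "j \<le> b \<longrightarrow> f j \<le> f a" if "a \<le> j" for j
    using that
  proof (induction j rule: dec_induct)
    case base then show ?case by simp
  next
    case (step m)
    show ?case
    proof
      assume mb: "Suc m \<le> b"
      have "f (m+1) - f m \<le> f (b+1) - f b" using dmono[OF H, of m b] step assms mb by simp
      then show "f (Suc m) \<le> f a" using step assms mb by simp
    qed
  qed
  then show ?thesis using assms by simp
qed

lemma between:
  fixes f :: "nat \<Rightarrow> int"
  assumes H: "\<forall>i. 1 \<le> i \<and> i + 2 \<le> n \<longrightarrow> f (i+1) - f i \<le> f (i+2) - f (i+1)"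
    and "1 \<le> a" "a \<le> b" "b \<le> c" "c \<le> n"
  shows "f b \<le> max (f a) (f c)"
proof (cases "b = c")
  case True then show ?thesis by simp
next
  case False
  show ?thesis
  proof (cases "f b \<le> f (b+1)")
    case True
    then have "f b \<le> f c" using up[OF H, of b c] assms False by simp
    then show ?thesis by simp
  next
    case F: False
    then have "f b \<le> f a" using down[OF H, of a b] assms False by simp
    then show ?thesis by simp
  qed
qed

lemma interval_nat:
  fixes S :: "nat set"
  assumes "finite S" "S \<noteq> {}" "\<And>a b c. a \<in> S \<Longrightarrow> c \<in> S \<Longrightarrow> a \<le> b \<Longrightarrow> b \<le> c \<Longrightarrow> b \<in> S"
  shows "S = {Min S..Max S}"
proof
  show "S \<subseteq> {Min S..Max S}" using assms(1) by auto
  show "{Min S..Max S} \<subseteq> S"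
  proof
    fix b assume b: "b \<in> {Min S..Max S}"
    have "Min S \<in> S" "Max S \<in> S" using assms(1,2) by simp_all
    then show "b \<in> S" using assms(3)[of "Min S" "Max S" b] b by simp
  qed
qed

lemma converse:
  assumes n1: "1 \<le> n" and cp: "convex_perm_matrix n P"
  shows "alg_reach n n P"
proof -
  from cp obtain \<pi> where bij: "bij_betw \<pi> {1..n} {1..n}" and PP: "P = perm_matrix n \<pi>"
    and H0: "\<forall>i. 1 \<le> i \<and> i + 2 \<le> n \<longrightarrow>
          int (\<pi> (i+1)) - int (\<pi> i) \<le> int (\<pi> (i+2)) - int (\<pi> (i+1))"
    unfolding convex_perm_matrix_def by blast
  define f where "f i = int (\<pi> i)" for i
  have H: "\<forall>i. 1 \<le> i \<and> i + 2 \<le> n \<longrightarrow> f (i+1) - f i \<le> f (i+2) - f (i+1)"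
    using H0 unfolding f_def by simp
  have inj: "inj_on \<pi> {1..n}" and im: "\<pi> ` {1..n} = {1..n}" using bij unfolding bij_betw_def by auto
  define S where "S k = {i\<in>{1..n}. \<pi> i \<le> k}" for k
  define Q where "Q k = {(i, \<pi> i) | i. i \<in> S k}" for k
  have Sclosed: "b \<in> S k" if "a \<in> S k" "c \<in> S k" "a \<le> b" "b \<le> c" for a b c k
  proof -
    have "f b \<le> max (f a) (f c)" using between[OF H, of a b c] that unfolding S_def by auto
    then show ?thesis using that unfolding S_def f_def by auto
  qed
  have Sne: "S k \<noteq> {}" if "1 \<le> k" "k \<le> n" for k
  proof -
    have "1 \<in> \<pi> ` {1..n}" using im n1 by simp
    then obtain i where "i \<in> {1..n}" "\<pi> i = 1" by force
    then show ?thesis using that unfolding S_def by auto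
  qed
  have Sfin: "finite (S k)" for k unfolding S_def by simp
  have Sint: "S k = {Min (S k)..Max (S k)}" if "1 \<le> k" "k \<le> n" for k
    by (rule interval_nat[OF Sfin Sne[OF that]]) (rule Sclosed)
  have Smem: "x \<in> S k \<longleftrightarrow> Min (S k) \<le> x \<and> x \<le> Max (S k)" if k: "1 \<le> k" "k \<le> n" for k x
  proof
    assume "x \<in> S k" then show "Min (S k) \<le> x \<and> x \<le> Max (S k)" using Sfin by simp
  next
    assume a: "Min (S k) \<le> x \<and> x \<le> Max (S k)"
    have "Min (S k) \<in> S k" "Max (S k) \<in> S k" using Sfin Sne[OF k] by simp_all
    then show "x \<in> S k" using Sclosed a by blast
  qed
  have sp: "subperm n (Q k)" for k
    unfolding subperm_def Q_def S_def using im inj by (auto dest: inj_onD)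
  have pc: "pcol (Q k) i = \<pi> i" if "i \<in> S k" for i k
    using pcol_eq[OF sp] that unfolding Q_def by blast
  have IkQ: "Ik k (Q k) = S k" for k
  proof -
    have "\<pi> i \<ge> 1" if "i \<in> {1..n}" for i using im that by auto
    then show ?thesis unfolding Ik_def Q_def S_def by auto
  qed
  have kcQ: "kconvex n k (Q k)" if k: "1 \<le> k" "k \<le> n" for k
    unfolding kconvex_def
  proof (intro conjI)
    show "k \<le> n" by fact
    show "subperm n (Q k)" by (rule sp)
    show "\<forall>j\<in>{1..k}. \<exists>!i. (i, j) \<in> Q k"
    proof
      fix j assume j: "j \<in> {1..k}"
      then have "j \<in> \<pi> ` {1..n}" using im k by auto
      then obtain i where i: "i \<in> {1..n}" "\<pi> i = j" by force
      then have "(i,j) \<in> Q k" using j unfolding Q_def S_def by auto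
      moreover have "i' = i" if "(i',j) \<in> Q k" for i'
        using that i inj unfolding Q_def S_def by (auto dest: inj_onD)
      ultimately show "\<exists>!i. (i, j) \<in> Q k" by blast
    qed
    show "\<exists>r s. Ik k (Q k) = {r..s} \<and> (\<forall>i. r \<le> i \<and> i + 2 \<le> s \<longrightarrow>
           int (pcol (Q k) (i+1)) - int (pcol (Q k) i) \<le> int (pcol (Q k) (i+2)) - int (pcol (Q k) (i+1)))"
    proof (intro exI conjI allI impI)
      show "Ik k (Q k) = {Min (S k)..Max (S k)}" by (subst IkQ) (rule Sint[OF k])
      fix i assume i: "Min (S k) \<le> i \<and> i + 2 \<le> Max (S k)"
      then have "i \<in> S k" "i+1 \<in> S k" "i+2 \<in> S k" using Smem[OF k] by auto
      moreover have "1 \<le> i" "i + 2 \<le> n" using calculation unfolding S_def by auto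
      ultimately show "int (pcol (Q k) (i+1)) - int (pcol (Q k) i) \<le> int (pcol (Q k) (i+2)) - int (pcol (Q k) (i+1))"
        using pc H unfolding f_def by simp
    qed
  qed
  have reach: "alg_reach n k (Q k)" if "1 \<le> k" "k \<le> n" for k
    using that
  proof (induction k rule: dec_induct)
    case base
    have "1 \<in> \<pi> ` {1..n}" using im n1 by simp
    then obtain i where i: "i \<in> {1..n}" "\<pi> i = 1" by force
    have "Q 1 = {(i,1)}"
    proof -
      have "S 1 = {i}"
      proof -
        have "x = i" if "x \<in> {1..n}" "\<pi> x \<le> 1" for x
        proof -
          have "\<pi> x \<in> \<pi> ` {1..n}" using that by simp
          then have "\<pi> x \<in> {1..n}" using im by simp
          then have "\<pi> x = \<pi> i" using i that by auto
          then show ?thesis using inj_onD[OF inj _ _ i(1)] that by simp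
        qed
        then have xi: "x = i" if "x \<in> S 1" for x using that unfolding S_def by blast
        show ?thesis
        proof
          show "S 1 \<subseteq> {i}" using xi by blast
          show "{i} \<subseteq> S 1" using i unfolding S_def by simp
        qed
      qed
      then show ?thesis unfolding Q_def using i by simp
    qed
    then show ?case using alg_reach.start[OF i(1)] by simp
  next
    case (step k)
    have k: "1 \<le> k" "k \<le> n" using step by auto
    have "Suc k \<in> \<pi> ` {1..n}" using im step by simp
    then obtain i1 where i1: "i1 \<in> {1..n}" "\<pi> i1 = k+1" by force
    have xi1: "x = i1" if "x \<in> {1..n}" "\<pi> x = k+1" for x
      using inj_onD[OF inj _ that(1) i1(1)] that i1 by simp
    have S1: "S (k+1) = insert i1 (S k)"
    proof (intro equalityI subsetI)
      fix x assume x: "x \<in> S (k+1)"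
      then have x1: "x \<in> {1..n}" "\<pi> x \<le> k+1" unfolding S_def by simp_all
      show "x \<in> insert i1 (S k)"
      proof (cases "\<pi> x = k+1")
        case True then show ?thesis using xi1[OF x1(1)] by simp
      next
        case False then have "\<pi> x \<le> k" using x1(2) by simp
        then show ?thesis using x1(1) unfolding S_def by simp
      qed
    next
      fix x assume "x \<in> insert i1 (S k)"
      then show "x \<in> S (k+1)" using i1 unfolding S_def by auto
    qed
    have Q1: "Q (k+1) = insert (i1, k+1) (Q k)" using S1 i1 unfolding Q_def by auto
    have nin: "i1 \<notin> S k" using i1 unfolding S_def by simp
    have kc1: "kconvex n (k+1) (insert (i1, k+1) (Q k))" using kcQ[of "k+1"] step Q1 by simp
    have "i1 \<in> Istar n k (Q k)"
    proof -
      let ?r = "Min (S k)" and ?s = "Max (S k)"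
      note rs = Smem[OF k]
      have rin: "?r \<in> S k" and sin: "?s \<in> S k" using Sfin Sne[OF k] by auto
      have "i1 < ?r \<or> ?s < i1" using nin rs[of i1] by auto
      then show ?thesis
      proof
        assume a: "i1 < ?r"
        have "?r - 1 \<in> S (k+1)"
          using Sclosed[of i1 "k+1" ?r "?r - 1"] S1 rin a by auto
        then have "?r - 1 = i1" using S1 rs[of "?r - 1"] a by auto
        moreover have "1 < ?r" using a i1 by auto
        ultimately show ?thesis unfolding Istar_def IkQ using kc1 by auto
      next
        assume a: "?s < i1"
        have "?s + 1 \<in> S (k+1)"
          using Sclosed[of ?s "k+1" i1 "?s + 1"] S1 sin a by auto
        then have "?s + 1 = i1" using S1 rs[of "?s + 1"] a by auto
        moreover have "?s < n" using a i1 by auto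
        ultimately show ?thesis unfolding Istar_def IkQ using kc1 by auto
      qed
    qed
    then have "alg_reach n (k+1) (insert (i1, k+1) (Q k))"
      using alg_reach.step[OF step(3)] k step by simp
    then show ?case using Q1 by simp
  qed
  have "Q n = P"
  proof -
    have le: "\<pi> i \<le> n" if "i \<in> {1..n}" for i
    proof -
      have "\<pi> i \<in> \<pi> ` {1..n}" using that by (rule imageI)
      then show ?thesis using im by simp
    qed
    have Sn: "S n = {1..n}" unfolding S_def using le by blast
    show ?thesis unfolding Q_def PP perm_matrix_def Sn by (rule refl)
  qed
  then show ?thesis using reach[of n] n1 by simp
qed

theorem lemma4p3:
  fixes n :: nat
  assumes "1 \<le> n"
  shows "(\<forall>P. alg_reach n n P \<longrightarrow> convex_perm_matrix n P)
       \<and> (\<forall>P. convex_perm_matrix n P \<longrightarrow> alg_reach n n P)"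
proof (intro conjI allI impI)
  fix P assume "alg_reach n n P"
  then have "kconvex n n P" "P \<subseteq> {1..n} \<times> {1..n}" using reach_inv by blast+
  then show "convex_perm_matrix n P" using final_conv assms by blast
next
  fix P assume "convex_perm_matrix n P"
  then show "alg_reach n n P" using converse assms by blast
qed

end
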